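(* A sequent $\Gamma\Rightarrow\Delta$ (of formulas of $\mathcal{L}^\Box$) is derivable in $\mathsf{S.ConstCK}^\Box$ if and only if $\iota(\Gamma\Rightarrow\Delta)$ is derivable in $\mathsf{ConstCK}^\Box$.
   Context: Language $\mathcal{L}^\Box$: formulas $\varphi ::= p \mid \bot \mid \varphi\wedge\varphi \mid \varphi\vee\varphi \mid \varphi\to\varphi \mid \varphi \mathrel{\Box\!\!\to} \varphi$; $\neg\varphi:=\varphi\to\bot$, $\top:=\neg\bot$, $\varphi\leftrightarrow\psi:=(\varphi\to\psi)\wedge(\psi\to\varphi)$. $\mathsf{ConstCK}^\Box$: any axiomatisation of intuitionistic propositional logic in $\mathcal{L}^\Box$ with modus ponens, plus RA$_\Box$: from $\varphi\leftrightarrow\rho$ infer $(\varphi\mathrel{\Box\!\!\to}\psi)\leftrightarrow(\rho\mathrel{\Box\!\!\to}\psi)$; RC$_\Box$: from $\psi\leftrightarrow\chi$ infer $(\varphi\mathrel{\Box\!\!\to}\psi)\leftrightarrow(\varphi\mathrel{\Box\!\!\to}\chi)$; CM$_\Box$: $(\varphi\mathrel{\Box\!\!\to}\psi\wedge\chi)\to(\varphi\mathrel{\Box\!\!\to}\psi)\wedge(\varphi\mathrel{\Box\!\!\to}\chi)$; CC$_\Box$: $(\varphi\mathrel{\Box\!\!\to}\psi)\wedge(\varphi\mathrel{\Box\!\!\to}\chi)\to(\varphi\mathrel{\Box\!\!\to}\psi\wedge\chi)$; CN$_\Box$: $\varphi\mathrel{\Box\!\!\to}\top$. A sequent $\Gamma\Rightarrow\Delta$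 is a pair of finite multisets of formulas with $|\Delta|\le1$; $\varphi\Leftrightarrow\rho$ abbreviates $\varphi\Rightarrow\rho$ and $\rho\Rightarrow\varphi$. $\iota(\Gamma\Rightarrow\Delta)=\bigwedge\Gamma\to\bigvee\Delta$ if $\Gamma\ne\emptyset$, $\bigvee\Delta$ otherwise, with $\bigvee\emptyset=\bot$. Rules of $\mathsf{S.ConstCK}^\Box$ (premisses / conclusion, $0\le|\Delta|\le1$, $n\ge0$): init: $\Gamma,p\Rightarrow p$; $\bot_L$: $\Gamma,\bot\Rightarrow\Delta$; $\wedge_L$: $\Gamma,\varphi,\psi\Rightarrow\Delta$ / $\Gamma,\varphi\wedge\psi\Rightarrow\Delta$; $\wedge_R$: $\Gamma\Rightarrow\varphi$, $\Gamma\Rightarrow\psi$ / $\Gamma\Rightarrow\varphi\wedge\psi$; $\vee_L$: $\Gamma,\varphi\Rightarrow\Delta$, $\Gamma,\psi\Rightarrow\Delta$ / $\Gamma,\varphi\vee\psi\Rightarrow\Delta$; $\vee_R^1$: $\Gamma\Rightarrow\varphi$ / $\Gamma\Rightarrow\varphi\vee\psi$; $\vee_R^2$: $\Gamma\Rightarrow\psi$ / $\Gamma\Rightarrow\varphi\vee\psi$; $\to_R$: $\Gamma,\varphi\Rightarrow\psi$ / $\Gamma\Rightarrow\varphi\to\psi$; $\to_L$: $\Gamma,\varphi\to\psi\Rightarrow\varphi$, $\Gamma,\psi\Rightarrow\Delta$ / $\Gamma,\varphi\to\psi\Rightarrow\Delta$; $\Box$: $\{\varphi\Leftrightarrow\rho_i\}_{i\le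 n}$, $\sigma_1,\dots,\sigma_n\Rightarrow\psi$ / $\Gamma,\rho_1\mathrel{\Box\!\!\to}\sigma_1,\dots,\rho_n\mathrel{\Box\!\!\to}\sigma_n\Rightarrow\varphi\mathrel{\Box\!\!\to}\psi$. *)

theory Defs
  imports Main "HOL-Library.Multiset"
begin

datatype 'a fm =
    Atom 'a
  | Bot
  | Conj "'a fm" "'a fm"
  | Disj "'a fm" "'a fm"
  | Imp "'a fm" "'a fm"
  | Box "'a fm" "'a fm"   (* \<phi> \<box>\<rightarrow> \<psi> *)

definition Neg :: "'a fm \<Rightarrow> 'a fm" where "Neg \<phi> = Imp \<phi> Bot"
definition Top :: "'a fm" where "Top = Neg Bot"
definition Iff :: "'a fm \<Rightarrow> 'a fm \<Rightarrow> 'a fm" where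
  "Iff \<phi> \<psi> = Conj (Imp \<phi> \<psi>) (Imp \<psi> \<phi>)"

inductive hil :: "'a fm \<Rightarrow> bool" where
  ax_K:   "hil (Imp A (Imp B A))"
| ax_S:   "hil (Imp (Imp A (Imp B C)) (Imp (Imp A B) (Imp A C)))"
| ax_C1:  "hil (Imp (Conj A B) A)"
| ax_C2:  "hil (Imp (Conj A B) B)"
| ax_C3:  "hil (Imp A (Imp B (Conj A B)))"
| ax_D1:  "hil (Imp A (Disj A B))"
| ax_D2:  "hil (Imp B (Disj A B))"
| ax_D3:  "hil (Imp (Imp A C) (Imp (Imp B C) (Imp (Disj A B) C)))"
| ax_EFQ: "hil (Imp Bot A)"
| MP:     "hil (Imp A B) \<Longrightarrow> hil A \<Longrightarrow> hil B"
| RA:     "hil (Iff \<phi> \<rho>) \<Longrightarrow> hil (Iff (Box \<phi> \<psi>) (Box \<rho> \<psi>))"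
| RC:     "hil (Iff \<psi> \<chi>) \<Longrightarrow> hil (Iff (Box \<phi> \<psi>) (Box \<phi> \<chi>))"
| CM:     "hil (Imp (Box \<phi> (Conj \<psi> \<chi>)) (Conj (Box \<phi> \<psi>) (Box \<phi> \<chi>)))"
| CC:     "hil (Imp (Conj (Box \<phi> \<psi>) (Box \<phi> \<chi>)) (Box \<phi> (Conj \<psi> \<chi>)))"
| CN:     "hil (Box \<phi> Top)"

inductive sd :: "'a fm multiset \<Rightarrow> 'a fm multiset \<Rightarrow> bool" where
  init:  "sd (add_mset (Atom p) \<Gamma>) {#Atom p#}"
| botL:  "size \<Delta> \<le> 1 \<Longrightarrow> sd (add_mset Bot \<Gamma>) \<Delta>"
| conjL: "size \<Delta> \<le> 1 \<Longrightarrow> sd (add_mset \<phi> (add_mset \<psi> \<Gamma>)) \<Delta> \<Longrightarrow> sd (add_mset (Conj \<phi> \<psi>) \<Gamma>) \<Delta>"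
| conjR: "sd \<Gamma> {#\<phi>#} \<Longrightarrow> sd \<Gamma> {#\<psi>#} \<Longrightarrow> sd \<Gamma> {#Conj \<phi> \<psi>#}"
| disjL: "size \<Delta> \<le> 1 \<Longrightarrow> sd (add_mset \<phi> \<Gamma>) \<Delta> \<Longrightarrow> sd (add_mset \<psi> \<Gamma>) \<Delta>
          \<Longrightarrow> sd (add_mset (Disj \<phi> \<psi>) \<Gamma>) \<Delta>"
| disjR1: "sd \<Gamma> {#\<phi>#} \<Longrightarrow> sd \<Gamma> {#Disj \<phi> \<psi>#}"
| disjR2: "sd \<Gamma> {#\<psi>#} \<Longrightarrow> sd \<Gamma> {#Disj \<phi> \<psi>#}"
| impR:  "sd (add_mset \<phi> \<Gamma>) {#\<psi>#} \<Longrightarrow> sd \<Gamma> {#Imp \<phi> \<psi>#}"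
| impL:  "size \<Delta> \<le> 1 \<Longrightarrow> sd (add_mset (Imp \<phi> \<psi>) \<Gamma>) {#\<phi>#} \<Longrightarrow> sd (add_mset \<psi> \<Gamma>) \<Delta>
          \<Longrightarrow> sd (add_mset (Imp \<phi> \<psi>) \<Gamma>) \<Delta>"
| box:   "(\<forall>(\<rho>, \<sigma>) \<in> set rs. sd {#\<phi>#} {#\<rho>#} \<and> sd {#\<rho>#} {#\<phi>#})
          \<Longrightarrow> sd (mset (map snd rs)) {#\<psi>#}
          \<Longrightarrow> sd (\<Gamma> + mset (map (\<lambda>(\<rho>, \<sigma>). Box \<rho> \<sigma>) rs)) {#Box \<phi> \<psi>#}"

fun bigConj :: "'a fm list \<Rightarrow> 'a fm" where
  "bigConj [] = Top"
| "bigConj [x] = x"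
| "bigConj (x # xs) = Conj x (bigConj xs)"

fun bigDisj :: "'a fm list \<Rightarrow> 'a fm" where
  "bigDisj [] = Bot"
| "bigDisj [x] = x"
| "bigDisj (x # xs) = Disj x (bigDisj xs)"

text \<open>Formula interpretation of a sequent; for a multiset we take (an arbitrary) enumeration.\<close>
definition iota :: "'a fm multiset \<Rightarrow> 'a fm multiset \<Rightarrow> 'a fm" where
  "iota \<Gamma> \<Delta> =
     (let D = bigDisj (SOME ds. mset ds = \<Delta>) in
      if \<Gamma> = {#} then D else Imp (bigConj (SOME gs. mset gs = \<Gamma>)) D)"

end

theory Submission
  imports Defs
begin

inductive der :: "'a fm set \<Rightarrow> 'a fm \<Rightarrow> bool" for G where
  dA: "A \<in> G \<Longrightarrow> der G A"
| dH: "hil A \<Longrightarrow> der G A"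
| dMP: "der G (Imp A B) \<Longrightarrow> der G A \<Longrightarrow> der G B"

lemma hil_id: "hil (Imp A A)"
proof -
  have 1: "hil (Imp (Imp A (Imp (Imp A A) A)) (Imp (Imp A (Imp A A)) (Imp A A)))" by (rule ax_S)
  have 2: "hil (Imp A (Imp (Imp A A) A))" by (rule ax_K)
  have 3: "hil (Imp A (Imp A A))" by (rule ax_K)
  show ?thesis using MP[OF MP[OF 1 2] 3] .
qed

lemma ded: "der (insert A G) B \<Longrightarrow> der G (Imp A B)"
proof (induction rule: der.induct)
  case (dA C)
  then show ?case
  proof
    assume "C = A" then show ?thesis using hil_id der.dH by blast
  next
    assume "C \<in> G"
    then have "der G C" by (rule der.dA)
    moreover have "der G (Imp C (Imp A C))" by (rule der.dH, rule ax_K)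
    ultimately show ?thesis by (rule der.dMP[rotated])
  qed
next
  case (dH C)
  then have "der G C" by (rule der.dH)
  moreover have "der G (Imp C (Imp A C))" by (rule der.dH, rule ax_K)
  ultimately show ?case by (rule der.dMP[rotated])
next
  case (dMP C D)
  have "der G (Imp (Imp A (Imp C D)) (Imp (Imp A C) (Imp A D)))" by (rule der.dH, rule ax_S)
  then show ?case using dMP.IH der.dMP by blast
qed

lemma der_empty: "der {} A \<Longrightarrow> hil A"
proof (induction rule: der.induct)
  case (dMP A B) then show ?case using MP by blast
qed auto

lemma der_mono: "der G A \<Longrightarrow> G \<subseteq> H \<Longrightarrow> der H A"
proof (induction rule: der.induct)
  case (dA A) then show ?case by (blast intro: der.dA)
next
  case (dH A) then show ?case by (blast intro: der.dH)
next
  case (dMP A B) then show ?case using der.dMP by blast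
qed

lemma der_trans: "der G A \<Longrightarrow> (\<And>x. x \<in> G \<Longrightarrow> der H x) \<Longrightarrow> der H A"
proof (induction rule: der.induct)
  case (dA A) then show ?case by blast
next
  case (dH A) then show ?case by (blast intro: der.dH)
next
  case (dMP A B) then show ?case using der.dMP by blast
qed

lemma der_cut: "der G A \<Longrightarrow> der (insert A G) B \<Longrightarrow> der G B"
  using ded dMP by blast

lemma der_conjE1: "der G (Conj A B) \<Longrightarrow> der G A" by (rule dMP[OF dH[OF ax_C1]])
lemma der_conjE2: "der G (Conj A B) \<Longrightarrow> der G B" by (rule dMP[OF dH[OF ax_C2]])
lemma der_conjI: "der G A \<Longrightarrow> der G B \<Longrightarrow> der G (Conj A B)" by (rule dMP[OF dMP[OF dH[OF ax_C3]]])
lemma der_disjI1: "der G A \<Longrightarrow> der G (Disj A B)" by (rule dMP[OF dH[OF ax_D1]])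
lemma der_disjI2: "der G B \<Longrightarrow> der G (Disj A B)" by (rule dMP[OF dH[OF ax_D2]])
lemma der_disjE: "der (insert A G) C \<Longrightarrow> der (insert B G) C \<Longrightarrow> der G (Disj A B) \<Longrightarrow> der G C"
proof -
  assume a: "der (insert A G) C" and b: "der (insert B G) C" and d: "der G (Disj A B)"
  have "der G (Imp (Imp A C) (Imp (Imp B C) (Imp (Disj A B) C)))" by (rule dH, rule ax_D3)
  then show ?thesis using ded[OF a] ded[OF b] d dMP by blast
qed
lemma der_botE: "der G Bot \<Longrightarrow> der G C" by (rule dMP[OF dH[OF ax_EFQ]])

lemma der_iffI: "der G (Imp A B) \<Longrightarrow> der G (Imp B A) \<Longrightarrow> der G (Iff A B)"
  unfolding Iff_def by (rule der_conjI)

lemma hil_iffD1: "hil (Iff A B) \<Longrightarrow> hil (Imp A B)"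
  unfolding Iff_def by (rule MP[OF ax_C1])
lemma hil_iffD2: "hil (Iff A B) \<Longrightarrow> hil (Imp B A)"
  unfolding Iff_def by (rule MP[OF ax_C2])

fun cT :: "'a fm list \<Rightarrow> 'a fm" where
  "cT [] = Top"
| "cT (x # xs) = Conj x (cT xs)"

lemma cT_elim: "x \<in> set xs \<Longrightarrow> der {cT xs} x"
proof (induction xs)
  case Nil then show ?case by simp
next
  case (Cons y ys)
  have c: "der {cT (y # ys)} (Conj y (cT ys))" by (simp add: dA)
  show ?case
  proof (cases "x = y")
    case True then show ?thesis using der_conjE1[OF c] by simp
  next
    case False
    then have "der {cT ys} x" using Cons by simp
    then show ?thesis using der_conjE2[OF c] by (metis der_trans singletonD)
  qed
qed

lemma box_mono: "hil (Imp C P) \<Longrightarrow> der G (Box F C) \<Longrightarrow> der G (Box F P)"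
proof -
  assume h: "hil (Imp C P)" and b: "der G (Box F C)"
  have "der {C} C" by (simp add: dA)
  moreover have "der {C} (Imp C P)" using h by (rule dH)
  ultimately have "der {C} (Conj C P)" using der_conjI dMP by blast
  then have "der {} (Imp C (Conj C P))" by (rule ded)
  moreover have "der {} (Imp (Conj C P) C)" by (simp add: ax_C1 dH)
  ultimately have "hil (Iff C (Conj C P))" using der_iffI der_empty by blast
  then have "hil (Iff (Box F C) (Box F (Conj C P)))" by (rule RC)
  then have "der G (Box F (Conj C P))" using b hil_iffD1 dH dMP by blast
  then have "der G (Conj (Box F C) (Box F P))" using CM dH dMP by blast
  then show ?thesis by (rule der_conjE2)
qed

lemma box_cT: "(\<And>s. s \<in> set ss \<Longrightarrow> der G (Box F s)) \<Longrightarrow> der G (Box F (cT ss))"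
proof (induction ss)
  case Nil then show ?case by (simp add: CN dH)
next
  case (Cons s ss)
  then have "der G (Conj (Box F s) (Box F (cT ss)))" by (simp add: der_conjI)
  then show ?case using CC dH dMP by fastforce
qed

lemma box_sound:
  assumes "\<And>s. s \<in> set ss \<Longrightarrow> der G (Box F s)" and "der (set ss) P"
  shows "der G (Box F P)"
proof -
  have "der {cT ss} P" using assms(2) cT_elim der_trans by blast
  then have "hil (Imp (cT ss) P)" using ded der_empty by blast
  then show ?thesis using box_mono box_cT assms(1) by blast
qed


definition dd :: "'a fm multiset \<Rightarrow> 'a fm" where
  "dd \<Delta> = bigDisj (SOME ds. mset ds = \<Delta>)"

lemma dd_empty[simp]: "dd {#} = Bot"
  unfolding dd_def by simp

lemma mset_single_eq: "mset ds = {#x#} \<longleftrightarrow> ds = [x]"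
  by (cases ds) auto

lemma dd_single[simp]: "dd {#x#} = x"
  unfolding dd_def mset_single_eq by simp

lemma sound_sd: "sd \<Gamma> \<Delta> \<Longrightarrow> der (set_mset \<Gamma>) (dd \<Delta>)"
proof (induction rule: sd.induct)
  case (init p \<Gamma>)
  then show ?case by (simp add: dA)
next
  case (botL \<Delta> \<Gamma>)
  then show ?case by (simp add: dA der_botE)
next
  case (conjL \<Delta> \<phi> \<psi> \<Gamma>)
  let ?H = "insert (Conj \<phi> \<psi>) (set_mset \<Gamma>)"
  have c: "der ?H (Conj \<phi> \<psi>)" by (simp add: dA)
  have "der (insert \<phi> (insert \<psi> ?H)) (dd \<Delta>)"
    using conjL.IH by (rule der_mono) auto
  then have "der (insert \<psi> ?H) (dd \<Delta>)" using der_cut der_mono der_conjE1[OF c] by (metis subset_insertI)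
  then have "der ?H (dd \<Delta>)" using der_cut der_conjE2[OF c] by blast
  then show ?case by simp
next
  case (conjR \<Gamma> \<phi> \<psi>)
  then show ?case by (simp add: der_conjI)
next
  case (disjL \<Delta> \<phi> \<Gamma> \<psi>)
  let ?H = "insert (Disj \<phi> \<psi>) (set_mset \<Gamma>)"
  have c: "der ?H (Disj \<phi> \<psi>)" by (simp add: dA)
  have 1: "der (insert \<phi> ?H) (dd \<Delta>)" using disjL.IH(1) by (rule der_mono) auto
  have 2: "der (insert \<psi> ?H) (dd \<Delta>)" using disjL.IH(2) by (rule der_mono) auto
  show ?case using der_disjE[OF 1 2 c] by simp
next
  case (disjR1 \<Gamma> \<phi> \<psi>)
  then show ?case by (simp add: der_disjI1)
next
  case (disjR2 \<Gamma> \<psi> \<phi>)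
  then show ?case by (simp add: der_disjI2)
next
  case (impR \<phi> \<Gamma> \<psi>)
  then show ?case by (simp add: ded)
next
  case (impL \<Delta> \<phi> \<psi> \<Gamma>)
  let ?H = "insert (Imp \<phi> \<psi>) (set_mset \<Gamma>)"
  have c: "der ?H (Imp \<phi> \<psi>)" by (simp add: dA)
  have "der ?H \<phi>" using impL.IH(1) by simp
  then have p: "der ?H \<psi>" using dMP[OF c] by blast
  have "der (insert \<psi> ?H) (dd \<Delta>)" using impL.IH(2) by (rule der_mono) auto
  then show ?case using der_cut[OF p] by simp
next
  case (box rs \<phi> \<psi> \<Gamma>)
  let ?H = "set_mset (\<Gamma> + mset (map (\<lambda>(\<rho>, \<sigma>). Box \<rho> \<sigma>) rs))"
  have "der ?H (Box \<phi> s)" if s: "s \<in> set (map snd rs)" for s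
  proof -
    obtain r where rs: "(r, s) \<in> set rs" using s by auto
    then have "der {\<phi>} r" "der {r} \<phi>" using box.IH(1) by auto
    then have "hil (Iff \<phi> r)" using ded der_empty der_iffI by blast
    then have "hil (Iff (Box \<phi> s) (Box r s))" by (rule RA)
    then have "hil (Imp (Box r s) (Box \<phi> s))" by (rule hil_iffD2)
    moreover have "der ?H (Box r s)" using rs by (force intro: dA)
    ultimately show ?thesis using dH dMP by blast
  qed
  moreover have "der (set (map snd rs)) \<psi>" using box.IH(2) by simp
  ultimately have "der ?H (Box \<phi> \<psi>)" by (rule box_sound[of "map snd rs"])
  then show ?case by simp
qed

lemma bigConj_elim: "xs \<noteq> [] \<Longrightarrow> x \<in> set xs \<Longrightarrow> der {bigConj xs} x"
proof (induction xs rule: bigConj.induct)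
  case 1 then show ?case by simp
next
  case (2 y) then show ?case by (simp add: dA)
next
  case (3 y z zs)
  have c: "der {bigConj (y # z # zs)} (Conj y (bigConj (z # zs)))" by (simp add: dA)
  show ?case
  proof (cases "x = y")
    case True then show ?thesis using der_conjE1[OF c] by simp
  next
    case False
    then have "der {bigConj (z # zs)} x" using 3 by simp
    then show ?thesis using der_conjE2[OF c] by (metis der_trans singletonD)
  qed
qed

lemma iota_eq: "iota \<Gamma> \<Delta> = (if \<Gamma> = {#} then dd \<Delta> else Imp (bigConj (SOME gs. mset gs = \<Gamma>)) (dd \<Delta>))"
  unfolding iota_def dd_def Let_def by simp

lemma sound: "sd \<Gamma> \<Delta> \<Longrightarrow> hil (iota \<Gamma> \<Delta>)"
proof -
  assume "sd \<Gamma> \<Delta>"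
  then have d: "der (set_mset \<Gamma>) (dd \<Delta>)" by (rule sound_sd)
  show ?thesis
  proof (cases "\<Gamma> = {#}")
    case True then show ?thesis using d der_empty by (simp add: iota_eq)
  next
    case False
    define gs where "gs = (SOME gs. mset gs = \<Gamma>)"
    have m: "mset gs = \<Gamma>" unfolding gs_def by (rule someI_ex, rule ex_mset)
    then have ne: "gs \<noteq> []" using False by auto
    have "der {bigConj gs} (dd \<Delta>)"
      using d by (rule der_trans) (use m ne bigConj_elim in auto)
    then have "hil (Imp (bigConj gs) (dd \<Delta>))" using ded der_empty by blast
    then show ?thesis using False by (simp add: iota_eq gs_def)
  qed
qed


abbreviation bx :: "('a fm \<times> 'a fm) list \<Rightarrow> 'a fm multiset" where
  "bx rs \<equiv> mset (map (\<lambda>(\<rho>, \<sigma>). Box \<rho> \<sigma>) rs)"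

lemma sd_eq: "sd M \<Delta> \<Longrightarrow> M = N \<Longrightarrow> sd N \<Delta>" by simp

lemma init': "M = add_mset (Atom p) K \<Longrightarrow> sd M {#Atom p#}"
  using sd.init by simp
lemma botL': "M = add_mset Bot K \<Longrightarrow> size \<Delta> \<le> 1 \<Longrightarrow> sd M \<Delta>"
  using sd.botL by simp
lemma conjL': "M = add_mset (Conj \<phi> \<psi>) K \<Longrightarrow> size \<Delta> \<le> 1 \<Longrightarrow> sd (add_mset \<phi> (add_mset \<psi> K)) \<Delta> \<Longrightarrow> sd M \<Delta>"
  using sd.conjL by simp
lemma disjL': "M = add_mset (Disj \<phi> \<psi>) K \<Longrightarrow> size \<Delta> \<le> 1 \<Longrightarrow> sd (add_mset \<phi> K) \<Delta> \<Longrightarrow> sd (add_mset \<psi> K) \<Delta> \<Longrightarrow> sd M \<Delta>"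
  using sd.disjL by simp
lemma impL': "M = add_mset (Imp \<phi> \<psi>) K \<Longrightarrow> size \<Delta> \<le> 1 \<Longrightarrow> sd M {#\<phi>#} \<Longrightarrow> sd (add_mset \<psi> K) \<Delta> \<Longrightarrow> sd M \<Delta>"
  using sd.impL by simp
lemma impR': "sd (add_mset \<phi> \<Gamma>) {#\<psi>#} \<Longrightarrow> \<Delta> = {#Imp \<phi> \<psi>#} \<Longrightarrow> sd \<Gamma> \<Delta>"
  using sd.impR by simp
lemma box': "M = \<Gamma> + bx rs \<Longrightarrow> (\<forall>(\<rho>, \<sigma>) \<in> set rs. sd {#\<phi>#} {#\<rho>#} \<and> sd {#\<rho>#} {#\<phi>#})
          \<Longrightarrow> sd (mset (map snd rs)) {#\<psi>#} \<Longrightarrow> sd M {#Box \<phi> \<psi>#}"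
  using sd.box by simp

lemma sd_size: "sd \<Gamma> \<Delta> \<Longrightarrow> size \<Delta> \<le> 1"
  by (induction rule: sd.induct) auto

lemma split_ne: "add_mset a M = add_mset b N \<Longrightarrow> a \<noteq> b \<Longrightarrow> \<exists>K. M = add_mset b K \<and> N = add_mset a K"
  by (auto simp: add_eq_conv_ex)

lemma split_box: "(\<And>a b. F \<noteq> Box a b) \<Longrightarrow> G + bx rs = add_mset F \<Gamma> \<Longrightarrow> \<exists>K. G = add_mset F K \<and> \<Gamma> = K + bx rs"
proof -
  assume nb: "\<And>a b. F \<noteq> Box a b" and e: "G + bx rs = add_mset F \<Gamma>"
  have "F \<in># G + bx rs" using e by simp
  moreover have "F \<notin># bx rs" using nb by auto
  ultimately have "F \<in># G" by simp
  then obtain K where K: "G = add_mset F K" by (meson multi_member_split)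
  then have "\<Gamma> = K + bx rs" using e by simp
  then show ?thesis using K by blast
qed

lemma weaken: "sd \<Gamma> \<Delta> \<Longrightarrow> sd (\<Gamma> + \<Theta>) \<Delta>"
proof (induction rule: sd.induct)
  case (init p \<Gamma>) then show ?case by (simp add: sd.init)
next
  case (botL \<Delta> \<Gamma>) then show ?case by (simp add: sd.botL)
next
  case (conjL \<Delta> \<phi> \<psi> \<Gamma>) then show ?case by (simp add: sd.conjL)
next
  case (conjR \<Gamma> \<phi> \<psi>) then show ?case by (simp add: sd.conjR)
next
  case (disjL \<Delta> \<phi> \<Gamma> \<psi>) then show ?case by (simp add: sd.disjL)
next
  case (disjR1 \<Gamma> \<phi> \<psi>) then show ?case by (simp add: sd.disjR1)
next
  case (disjR2 \<Gamma> \<psi> \<phi>) then show ?case by (simp add: sd.disjR2)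
next
  case (impR \<phi> \<Gamma> \<psi>) then show ?case by (simp add: sd.impR)
next
  case (impL \<Delta> \<phi> \<psi> \<Gamma>) then show ?case by (simp add: sd.impL)
next
  case (box rs \<phi> \<psi> \<Gamma>)
  show ?case by (rule box'[of _ "\<Gamma> + \<Theta>"]) (use box in auto)
qed

lemma weaken1: "sd \<Gamma> \<Delta> \<Longrightarrow> sd (add_mset A \<Gamma>) \<Delta>"
  using weaken[of \<Gamma> \<Delta> "{#A#}"] by simp

lemma weaken_sub: "sd \<Gamma> \<Delta> \<Longrightarrow> \<Gamma> \<subseteq># \<Gamma>' \<Longrightarrow> sd \<Gamma>' \<Delta>"
  by (metis mset_subset_eq_exists_conv weaken)


lemma idt: "sd (add_mset A \<Gamma>) {#A#}"
proof (induction A arbitrary: \<Gamma>)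
  case (Atom p) then show ?case by (rule sd.init)
next
  case Bot then show ?case by (simp add: sd.botL)
next
  case (Conj A B)
  have "sd (add_mset A (add_mset B \<Gamma>)) {#A#}" by (rule Conj.IH)
  moreover have "sd (add_mset A (add_mset B \<Gamma>)) {#B#}"
    using Conj.IH(2)[of "add_mset A \<Gamma>"] by (simp add: add_mset_commute)
  ultimately show ?case by (simp add: sd.conjL sd.conjR)
next
  case (Disj A B)
  have "sd (add_mset A \<Gamma>) {#Disj A B#}" by (simp add: Disj.IH(1) sd.disjR1)
  moreover have "sd (add_mset B \<Gamma>) {#Disj A B#}" by (simp add: Disj.IH(2) sd.disjR2)
  ultimately show ?case by (simp add: sd.disjL)
next
  case (Imp A B)
  have "sd (add_mset (Imp A B) (add_mset A \<Gamma>)) {#A#}"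
    using Imp.IH(1)[of "add_mset (Imp A B) \<Gamma>"] by (simp add: add_mset_commute)
  moreover have "sd (add_mset B (add_mset A \<Gamma>)) {#B#}" by (rule Imp.IH(2))
  ultimately have "sd (add_mset (Imp A B) (add_mset A \<Gamma>)) {#B#}" by (simp add: sd.impL)
  then show ?case by (intro sd.impR) (simp add: add_mset_commute)
next
  case (Box A B)
  show ?case
    by (rule box'[of _ \<Gamma> "[(A,B)]"]) (use Box.IH[of "{#}"] in auto)
qed


lemma inv_conjR: "sd \<Gamma> D \<Longrightarrow> D = {#Conj X Y#} \<Longrightarrow> sd \<Gamma> {#X#} \<and> sd \<Gamma> {#Y#}"
proof (induction rule: sd.induct)
  case (botL \<Delta> \<Gamma>) then show ?case by (simp add: sd.botL)
next
  case (conjL \<Delta> \<phi> \<psi> \<Gamma>) then show ?case by (simp add: sd.conjL)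
next
  case (disjL \<Delta> \<phi> \<Gamma> \<psi>) then show ?case by (simp add: sd.disjL)
next
  case (impL \<Delta> \<phi> \<psi> \<Gamma>) then show ?case using sd.impL[of "{#X#}" \<phi> \<psi> \<Gamma>] sd.impL[of "{#Y#}" \<phi> \<psi> \<Gamma>] by simp
next
  case (conjR \<Gamma> \<phi> \<psi>) then show ?case by simp
next
  case (box rs \<phi> \<psi> \<Gamma>) then show ?case by simp
next
  case (init p \<Gamma>) then show ?case by simp
next
  case (disjR1 \<Gamma> \<phi> \<psi>) then show ?case by simp
next
  case (disjR2 \<Gamma> \<psi> \<phi>) then show ?case by simp
next
  case (impR \<phi> \<Gamma> \<psi>) then show ?case by simp
qed


lemma inv_impR: "sd \<Gamma> D \<Longrightarrow> D = {#Imp X Y#} \<Longrightarrow> sd (add_mset X \<Gamma>) {#Y#}"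
proof (induction rule: sd.induct)
  case (botL \<Delta> \<Gamma>) then show ?case by (simp add: botL')
next
  case (conjL \<Delta> \<phi> \<psi> \<Gamma>)
  show ?case by (rule conjL'[of _ \<phi> \<psi> "add_mset X \<Gamma>"]) (use conjL in \<open>auto simp: add_mset_commute\<close>)
next
  case (disjL \<Delta> \<phi> \<Gamma> \<psi>)
  show ?case by (rule disjL'[of _ \<phi> \<psi> "add_mset X \<Gamma>"]) (use disjL in \<open>auto simp: add_mset_commute\<close>)
next
  case (impL \<Delta> \<phi> \<psi> \<Gamma>)
  have 1: "sd (add_mset X (add_mset (Imp \<phi> \<psi>) \<Gamma>)) {#\<phi>#}" using impL(2) by (rule weaken1)
  have 2: "sd (add_mset \<psi> (add_mset X \<Gamma>)) {#Y#}" using impL by (simp add: add_mset_commute)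
  show ?case by (rule impL'[of _ \<phi> \<psi> "add_mset X \<Gamma>", OF _ _ 1 2]) (use impL in \<open>auto simp: add_mset_commute\<close>)
next
  case (impR \<phi> \<Gamma> \<psi>) then show ?case by simp
next
  case (init p \<Gamma>) then show ?case by simp
next
  case (conjR \<Gamma> \<phi> \<psi>) then show ?case by simp
next
  case (disjR1 \<Gamma> \<phi> \<psi>) then show ?case by simp
next
  case (disjR2 \<Gamma> \<psi> \<phi>) then show ?case by simp
next
  case (box rs \<phi> \<psi> \<Gamma>) then show ?case by simp
qed

lemma bot_right: "sd \<Gamma> D \<Longrightarrow> D = {#Bot#} \<Longrightarrow> size \<Delta> \<le> 1 \<Longrightarrow> sd \<Gamma> \<Delta>"
proof (induction rule: sd.induct)
  case (botL \<Delta>' \<Gamma>) then show ?case by (simp add: sd.botL)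
next
  case (conjL \<Delta>' \<phi> \<psi> \<Gamma>) then show ?case by (simp add: sd.conjL)
next
  case (disjL \<Delta>' \<phi> \<Gamma> \<psi>) then show ?case by (simp add: sd.disjL)
next
  case (impL \<Delta>' \<phi> \<psi> \<Gamma>) then show ?case using sd.impL[of \<Delta> \<phi> \<psi> \<Gamma>] by simp
next
  case (impR \<phi> \<Gamma> \<psi>) then show ?case by simp
next
  case (init p \<Gamma>) then show ?case by simp
next
  case (conjR \<Gamma> \<phi> \<psi>) then show ?case by simp
next
  case (disjR1 \<Gamma> \<phi> \<psi>) then show ?case by simp
next
  case (disjR2 \<Gamma> \<psi> \<phi>) then show ?case by simp
next
  case (box rs \<phi> \<psi> \<Gamma>) then show ?case by simp
qed

lemma inv_gen:
  assumes "sd M \<Delta>" and "M = add_mset F \<Gamma>"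
    and nb: "\<And>a b. F \<noteq> Box a b" and na: "\<And>p. F \<noteq> Atom p" and nbot: "F \<noteq> Bot"
    and pc: "\<And>\<phi> \<psi> \<Gamma> \<Delta>. F = Conj \<phi> \<psi> \<Longrightarrow> size \<Delta> \<le> 1 \<Longrightarrow> sd (add_mset \<phi> (add_mset \<psi> \<Gamma>)) \<Delta> \<Longrightarrow> sd (N + \<Gamma>) \<Delta>"
    and pd: "\<And>\<phi> \<psi> \<Gamma> \<Delta>. F = Disj \<phi> \<psi> \<Longrightarrow> size \<Delta> \<le> 1 \<Longrightarrow> sd (add_mset \<phi> \<Gamma>) \<Delta> \<Longrightarrow> sd (add_mset \<psi> \<Gamma>) \<Delta> \<Longrightarrow> sd (N + \<Gamma>) \<Delta>"
    and pi: "\<And>\<phi> \<psi> \<Gamma> \<Delta>. F = Imp \<phi> \<psi> \<Longrightarrow> size \<Delta> \<le> 1 \<Longrightarrow> sd (add_mset (Imp \<phi> \<psi>) \<Gamma>) {#\<phi>#} \<Longrightarrow> sd (add_mset \<psi> \<Gamma>) \<Delta> \<Longrightarrow> sd (N + \<Gamma>) \<Delta>"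
  shows "sd (N + \<Gamma>) \<Delta>"
  using assms(1,2)
proof (induction arbitrary: \<Gamma> rule: sd.induct)
  case (init p \<Gamma>0)
  obtain K where "\<Gamma> = add_mset (Atom p) K" using split_ne[OF init.prems] na[of p] by fastforce
  show ?case by (rule init'[of _ p "N + K"]) (use \<open>\<Gamma> = add_mset (Atom p) K\<close> in simp)
next
  case (botL \<Delta> \<Gamma>0)
  obtain K where "\<Gamma> = add_mset Bot K" using split_ne[OF botL.prems] nbot by fastforce
  show ?case by (rule botL'[of _ "N + K"]) (use \<open>\<Gamma> = add_mset Bot K\<close> botL in simp_all)
next
  case (conjL \<Delta> \<phi> \<psi> \<Gamma>0)
  show ?case
  proof (cases "F = Conj \<phi> \<psi>")
    case True
    then have "\<Gamma>0 = \<Gamma>" using conjL by simp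
    then show ?thesis using conjL True pc by blast
  next
    case False
    then obtain K where K: "\<Gamma>0 = add_mset F K" "\<Gamma> = add_mset (Conj \<phi> \<psi>) K"
      using split_ne[OF conjL.prems] False by fastforce
    have ih: "sd (N + add_mset \<phi> (add_mset \<psi> K)) \<Delta>"
      using conjL.IH[of "add_mset \<phi> (add_mset \<psi> K)"] K by (simp add: add_mset_commute)
    show ?thesis by (rule conjL'[of _ \<phi> \<psi> "N + K"]) (use K conjL ih in simp_all)
  qed
next
  case (conjR \<Gamma>0 \<phi> \<psi>)
  then show ?case by (simp add: sd.conjR)
next
  case (disjL \<Delta> \<phi> \<Gamma>0 \<psi>)
  show ?case
  proof (cases "F = Disj \<phi> \<psi>")
    case True
    then have "\<Gamma>0 = \<Gamma>" using disjL by simp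
    then show ?thesis using disjL True pd by blast
  next
    case False
    then obtain K where K: "\<Gamma>0 = add_mset F K" "\<Gamma> = add_mset (Disj \<phi> \<psi>) K"
      using split_ne[OF disjL.prems] False by fastforce
    have 1: "sd (N + add_mset \<phi> K) \<Delta>"
      using disjL.IH(1)[of "add_mset \<phi> K"] K by (simp add: add_mset_commute)
    have 2: "sd (N + add_mset \<psi> K) \<Delta>"
      using disjL.IH(2)[of "add_mset \<psi> K"] K by (simp add: add_mset_commute)
    show ?thesis by (rule disjL'[of _ \<phi> \<psi> "N + K"]) (use K disjL 1 2 in simp_all)
  qed
next
  case (disjR1 \<Gamma>0 \<phi> \<psi>)
  then show ?case by (simp add: sd.disjR1)
next
  case (disjR2 \<Gamma>0 \<psi> \<phi>)
  then show ?case by (simp add: sd.disjR2)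
next
  case (impR \<phi> \<Gamma>0 \<psi>)
  have "sd (N + add_mset \<phi> \<Gamma>) {#\<psi>#}"
    using impR.IH[of "add_mset \<phi> \<Gamma>"] impR.prems by (simp add: add_mset_commute)
  then show ?case by (intro sd.impR) simp
next
  case (impL \<Delta> \<phi> \<psi> \<Gamma>0)
  show ?case
  proof (cases "F = Imp \<phi> \<psi>")
    case True
    then have "\<Gamma>0 = \<Gamma>" using impL by simp
    then show ?thesis using impL True pi by blast
  next
    case False
    then obtain K where K: "\<Gamma>0 = add_mset F K" "\<Gamma> = add_mset (Imp \<phi> \<psi>) K"
      using split_ne[OF impL.prems] False by fastforce
    have 1: "sd (N + \<Gamma>) {#\<phi>#}"
      using impL.IH(1)[of "\<Gamma>"] K by (simp add: add_mset_commute)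
    have 2: "sd (N + add_mset \<psi> K) \<Delta>"
      using impL.IH(2)[of "add_mset \<psi> K"] K by (simp add: add_mset_commute)
    show ?thesis by (rule impL'[of _ \<phi> \<psi> "N + K"]) (use K impL 1 2 in simp_all)
  qed
next
  case (box rs \<phi> \<psi> \<Gamma>0)
  then obtain K where K: "\<Gamma>0 = add_mset F K" "\<Gamma> = K + bx rs"
    using split_box[OF nb box.prems] by blast
  show ?case by (rule box'[of _ "N + K" rs]) (use K box in auto)
qed

lemma inv_conjL: "sd (add_mset (Conj X Y) \<Gamma>) \<Delta> \<Longrightarrow> sd (add_mset X (add_mset Y \<Gamma>)) \<Delta>"
  using inv_gen[of "add_mset (Conj X Y) \<Gamma>" \<Delta> "Conj X Y" \<Gamma> "{#X, Y#}"] by simp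

lemma inv_disjL1: "sd (add_mset (Disj X Y) \<Gamma>) \<Delta> \<Longrightarrow> sd (add_mset X \<Gamma>) \<Delta>"
  using inv_gen[of "add_mset (Disj X Y) \<Gamma>" \<Delta> "Disj X Y" \<Gamma> "{#X#}"] by simp

lemma inv_disjL2: "sd (add_mset (Disj X Y) \<Gamma>) \<Delta> \<Longrightarrow> sd (add_mset Y \<Gamma>) \<Delta>"
  using inv_gen[of "add_mset (Disj X Y) \<Gamma>" \<Delta> "Disj X Y" \<Gamma> "{#Y#}"] by simp

lemma inv_impL: "sd (add_mset (Imp X Y) \<Gamma>) \<Delta> \<Longrightarrow> sd (add_mset Y \<Gamma>) \<Delta>"
  using inv_gen[of "add_mset (Imp X Y) \<Gamma>" \<Delta> "Imp X Y" \<Gamma> "{#Y#}"] by simp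


lemma cnt_inj: "inj f \<Longrightarrow> count (image_mset f M) (f x) = count M x"
  by (induction M) (auto simp: inj_eq)

lemma cnt_notin: "y \<notin> range f \<Longrightarrow> count (image_mset f M) y = 0"
  by (induction M) auto

lemma image_mset_diff_inj: "inj f \<Longrightarrow> image_mset f (A - B) = image_mset f A - image_mset f B"
proof (rule multiset_eqI)
  fix y assume i: "inj f"
  show "count (image_mset f (A - B)) y = count (image_mset f A - image_mset f B) y"
  proof (cases "y \<in> range f")
    case True
    then obtain x where "y = f x" by auto
    then show ?thesis using i by (simp add: cnt_inj)
  next
    case False
    then show ?thesis by (simp add: cnt_notin)
  qed
qed

lemma inj_bx: "inj (\<lambda>(\<rho>, \<sigma>). Box \<rho> \<sigma>)"
  by (auto simp: inj_def)

lemma sub_notin: "A \<subseteq># add_mset x B \<Longrightarrow> x \<notin># A \<Longrightarrow> A \<subseteq># B"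
  unfolding subseteq_mset_def
proof
  fix a assume 1: "\<forall>a. count A a \<le> count (add_mset x B) a" and 2: "x \<notin># A"
  show "count A a \<le> count B a"
  proof (cases "a = x")
    case True then show ?thesis using 2 by (simp add: not_in_iff)
  next
    case False then show ?thesis using 1[rule_format, of a] by simp
  qed
qed

lemma bx_notin: "(\<And>a b. F \<noteq> Box a b) \<Longrightarrow> bx rs \<subseteq># add_mset F \<Gamma> \<Longrightarrow> bx rs \<subseteq># \<Gamma>"
  by (rule sub_notin) auto

definition CUT :: "'a fm \<Rightarrow> bool" where
  "CUT A \<longleftrightarrow> (\<forall>\<Gamma> E. sd \<Gamma> {#A#} \<longrightarrow> sd (add_mset A \<Gamma>) E \<longrightarrow> sd \<Gamma> E)"

lemma CUTD: "CUT A \<Longrightarrow> sd \<Gamma> {#A#} \<Longrightarrow> sd (add_mset A \<Gamma>) E \<Longrightarrow> sd \<Gamma> E"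
  unfolding CUT_def by blast

lemma disj_lemma:
  assumes cx: "CUT X" and cy: "CUT Y"
  shows "sd \<Gamma> D \<Longrightarrow> D = {#Disj X Y#} \<Longrightarrow> sd (add_mset X \<Gamma>) E \<Longrightarrow> sd (add_mset Y \<Gamma>) E \<Longrightarrow> sd \<Gamma> E"
proof (induction rule: sd.induct)
  case (init p \<Gamma>) then show ?case by simp
next
  case (botL \<Delta> \<Gamma>) then show ?case using sd_size botL' by blast
next
  case (conjL \<Delta> \<phi> \<psi> \<Gamma>)
  have a: "sd (add_mset (Conj \<phi> \<psi>) (add_mset X \<Gamma>)) E" using conjL.prems by (simp add: add_mset_commute)
  have 1: "sd (add_mset X (add_mset \<phi> (add_mset \<psi> \<Gamma>))) E" using inv_conjL[OF a] by (simp add: add_mset_commute)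
  have b: "sd (add_mset (Conj \<phi> \<psi>) (add_mset Y \<Gamma>)) E" using conjL.prems by (simp add: add_mset_commute)
  have 2: "sd (add_mset Y (add_mset \<phi> (add_mset \<psi> \<Gamma>))) E" using inv_conjL[OF b] by (simp add: add_mset_commute)
  have "sd (add_mset \<phi> (add_mset \<psi> \<Gamma>)) E" using conjL.IH conjL.prems 1 2 by blast
  then show ?case using sd_size[OF 1] by (rule conjL'[OF refl, rotated])
next
  case (conjR \<Gamma> \<phi> \<psi>) then show ?case by simp
next
  case (disjL \<Delta> \<phi> \<Gamma> \<psi>)
  have a: "sd (add_mset (Disj \<phi> \<psi>) (add_mset X \<Gamma>)) E" using disjL.prems by (simp add: add_mset_commute)
  have b: "sd (add_mset (Disj \<phi> \<psi>) (add_mset Y \<Gamma>)) E" using disjL.prems by (simp add: add_mset_commute)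
  have 1: "sd (add_mset X (add_mset \<phi> \<Gamma>)) E" using inv_disjL1[OF a] by (simp add: add_mset_commute)
  have 2: "sd (add_mset Y (add_mset \<phi> \<Gamma>)) E" using inv_disjL1[OF b] by (simp add: add_mset_commute)
  have 3: "sd (add_mset X (add_mset \<psi> \<Gamma>)) E" using inv_disjL2[OF a] by (simp add: add_mset_commute)
  have 4: "sd (add_mset Y (add_mset \<psi> \<Gamma>)) E" using inv_disjL2[OF b] by (simp add: add_mset_commute)
  have "sd (add_mset \<phi> \<Gamma>) E" using disjL.IH(1) disjL.prems 1 2 by blast
  moreover have "sd (add_mset \<psi> \<Gamma>) E" using disjL.IH(2) disjL.prems 3 4 by blast
  ultimately show ?case using sd_size[OF 1] by (intro sd.disjL)
next
  case (disjR1 \<Gamma> \<phi> \<psi>)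
  then show ?case using CUTD[OF cx] by auto
next
  case (disjR2 \<Gamma> \<psi> \<phi>)
  then show ?case using CUTD[OF cy] by auto
next
  case (impR \<phi> \<Gamma> \<psi>) then show ?case by simp
next
  case (impL \<Delta> \<phi> \<psi> \<Gamma>)
  have a: "sd (add_mset (Imp \<phi> \<psi>) (add_mset X \<Gamma>)) E" using impL.prems by (simp add: add_mset_commute)
  have b: "sd (add_mset (Imp \<phi> \<psi>) (add_mset Y \<Gamma>)) E" using impL.prems by (simp add: add_mset_commute)
  have 1: "sd (add_mset X (add_mset \<psi> \<Gamma>)) E" using inv_impL[OF a] by (simp add: add_mset_commute)
  have 2: "sd (add_mset Y (add_mset \<psi> \<Gamma>)) E" using inv_impL[OF b] by (simp add: add_mset_commute)
  have 3: "sd (add_mset \<psi> \<Gamma>) E" using impL.IH(2) impL.prems 1 2 by blast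
  show ?case by (rule impL'[OF refl sd_size[OF 1] impL.hyps(2) 3])
next
  case (box rs \<phi> \<psi> \<Gamma>) then show ?case by simp
qed


lemma sub_plus: "(A::'b multiset) \<subseteq># B + (A - B)"
  unfolding subseteq_mset_def count_union count_diff by (intro allI) arith

lemma sub_add: "(A::'b multiset) \<subseteq># B \<Longrightarrow> A \<subseteq># add_mset x B"
proof -
  assume "A \<subseteq># B"
  moreover have "B \<subseteq># add_mset x B" by (metis add_mset_add_single mset_subset_eq_add_left)
  ultimately show ?thesis by (rule subset_mset.order_trans)
qed

lemma box_lemma:
  assumes cr: "CUT \<rho>" and cs: "CUT \<sigma>"
    and fr: "sd {#\<phi>#} {#\<rho>#}" and rf: "sd {#\<rho>#} {#\<phi>#}"
    and rest: "\<forall>(a, b) \<in> set rest. sd {#\<phi>#} {#a#} \<and> sd {#a#} {#\<phi>#}"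
    and seq: "sd (add_mset \<sigma> (mset (map snd rest))) {#\<psi>#}"
  shows "sd \<Gamma> D \<Longrightarrow> D = {#Box \<rho> \<sigma>#} \<Longrightarrow> bx rest \<subseteq># \<Gamma> \<Longrightarrow> sd \<Gamma> {#Box \<phi> \<psi>#}"
proof (induction rule: sd.induct)
  case (init p \<Gamma>) then show ?case by simp
next
  case (botL \<Delta> \<Gamma>) then show ?case by (simp add: sd.botL)
next
  case (conjL \<Delta> \<phi>' \<psi>' \<Gamma>)
  have "bx rest \<subseteq># \<Gamma>" using bx_notin conjL.prems by blast
  then have "bx rest \<subseteq># add_mset \<phi>' (add_mset \<psi>' \<Gamma>)"
    by (simp add: sub_add)
  then show ?case using conjL by (simp add: sd.conjL)
next
  case (conjR \<Gamma> \<phi> \<psi>) then show ?case by simp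
next
  case (disjL \<Delta> \<phi>' \<Gamma> \<psi>')
  have "bx rest \<subseteq># \<Gamma>" using bx_notin disjL.prems by blast
  then have "bx rest \<subseteq># add_mset \<phi>' \<Gamma>" "bx rest \<subseteq># add_mset \<psi>' \<Gamma>"
    by (simp_all add: sub_add)
  then show ?case using disjL by (simp add: sd.disjL)
next
  case (disjR1 \<Gamma> \<phi> \<psi>) then show ?case by simp
next
  case (disjR2 \<Gamma> \<psi> \<phi>) then show ?case by simp
next
  case (impR \<phi> \<Gamma> \<psi>) then show ?case by simp
next
  case (impL \<Delta> \<phi>' \<psi>' \<Gamma>)
  have "bx rest \<subseteq># \<Gamma>" using bx_notin impL.prems by blast
  then have "bx rest \<subseteq># add_mset \<psi>' \<Gamma>"
    by (simp add: sub_add)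
  then have 2: "sd (add_mset \<psi>' \<Gamma>) {#Box \<phi> \<psi>#}" using impL by simp
  show ?case by (rule impL'[OF refl _ impL.hyps(2) 2]) simp
next
  case (box rs \<rho>' \<sigma>' \<Gamma>L)
  then have eqs: "\<rho>' = \<rho>" "\<sigma>' = \<sigma>" by auto
  obtain u where u: "mset u = mset rs + (mset rest - mset rs)" using ex_mset by blast
  have bxu: "bx u = bx rs + (bx rest - bx rs)"
    using u image_mset_diff_inj[OF inj_bx] by simp
  have "bx rest - bx rs \<subseteq># \<Gamma>L" using box.prems(2) by (simp add: subset_eq_diff_conv)
  then obtain K where K: "\<Gamma>L = (bx rest - bx rs) + K" using mset_subset_eq_exists_conv by blast
  have G: "\<Gamma>L + bx rs = K + bx u" using K bxu by simp
  have prem: "\<forall>(a, b) \<in> set u. sd {#\<phi>#} {#a#} \<and> sd {#a#} {#\<phi>#}"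
  proof (intro ballI, clarify)
    fix a b assume ab: "(a, b) \<in> set u"
    then have "(a, b) \<in># mset rs + (mset rest - mset rs)" using u by (metis set_mset_mset)
    then have "(a, b) \<in> set rs \<or> (a, b) \<in> set rest" by (auto dest: in_diffD)
    then show "sd {#\<phi>#} {#a#} \<and> sd {#a#} {#\<phi>#}"
    proof
      assume "(a, b) \<in> set rs"
      then have "sd {#\<rho>'#} {#a#} \<and> sd {#a#} {#\<rho>'#}" using box.IH(1) by (auto dest!: bspec)
      then have 1: "sd {#\<rho>#} {#a#}" "sd {#a#} {#\<rho>#}" using eqs by simp_all
      have "sd (add_mset \<rho> {#\<phi>#}) {#a#}" using weaken1[OF 1(1)] by (simp add: add_mset_commute)
      then have "sd {#\<phi>#} {#a#}" using CUTD[OF cr fr] by blast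
      moreover have "sd (add_mset \<rho> {#a#}) {#\<phi>#}" using weaken1[OF rf, of a] by (simp add: add_mset_commute)
      then have "sd {#a#} {#\<phi>#}" using CUTD[OF cr 1(2)] by blast
      ultimately show ?thesis by blast
    next
      assume "(a, b) \<in> set rest" then show ?thesis using rest by auto
    qed
  qed
  have s1: "mset rest \<subseteq># mset u" using u sub_plus by metis
  have s2: "mset rs \<subseteq># mset u" using u by simp
  have "image_mset snd (mset rest) \<subseteq># image_mset snd (mset u)"
    using s1 by (rule image_mset_subseteq_mono)
  then obtain J where J: "mset (map snd u) = mset (map snd rest) + J"
    using mset_subset_eq_exists_conv by (metis mset_map)
  have "sd (add_mset \<sigma> (mset (map snd rest)) + J) {#\<psi>#}" using seq by (rule weaken)
  then have q1: "sd (add_mset \<sigma> (mset (map snd u))) {#\<psi>#}" using J by simp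
  have "image_mset snd (mset rs) \<subseteq># image_mset snd (mset u)"
    using s2 by (rule image_mset_subseteq_mono)
  then have q2: "sd (mset (map snd u)) {#\<sigma>#}" using weaken_sub box.hyps(1) eqs by (metis mset_map)
  have "sd (mset (map snd u)) {#\<psi>#}" using CUTD[OF cs q2 q1] .
  then show ?case using G prem by (intro box') simp_all
qed


lemma cut_step:
  fixes A :: "'a fm"
  assumes IH: "\<And>B :: 'a fm. size B < size A \<Longrightarrow> CUT B"
  shows "sd M E \<Longrightarrow> M = add_mset A \<Gamma> \<Longrightarrow> sd \<Gamma> {#A#} \<Longrightarrow> sd \<Gamma> E"
proof (induction arbitrary: \<Gamma> rule: sd.induct)
  case (init p \<Gamma>0)
  show ?case
  proof (cases "A = Atom p")
    case True then show ?thesis using init by simp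
  next
    case False
    then obtain K where "\<Gamma> = add_mset (Atom p) K" using split_ne[OF init.prems(1)] by fastforce
    then show ?thesis by (rule init')
  qed
next
  case (botL \<Delta> \<Gamma>0)
  show ?case
  proof (cases "A = Bot")
    case True then show ?thesis using bot_right[OF botL.prems(2)] botL.hyps by simp
  next
    case False
    then obtain K where "\<Gamma> = add_mset Bot K" using split_ne[OF botL.prems(1)] by fastforce
    then show ?thesis by (rule botL'[OF _ botL.hyps])
  qed
next
  case (conjL \<Delta> \<phi> \<psi> \<Gamma>0)
  show ?case
  proof (cases "A = Conj \<phi> \<psi>")
    case True
    then have G: "\<Gamma>0 = \<Gamma>" using conjL.prems by simp
    have l: "sd \<Gamma> {#\<phi>#}" "sd \<Gamma> {#\<psi>#}" using inv_conjR[OF conjL.prems(2), of \<phi> \<psi>] True by simp_all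
    have cp: "CUT \<phi>" "CUT \<psi>" using IH[of \<phi>] IH[of \<psi>] True by simp_all
    have "sd (add_mset \<psi> (add_mset \<phi> \<Gamma>)) \<Delta>" using conjL.hyps(2) G by (simp add: add_mset_commute)
    then have "sd (add_mset \<phi> \<Gamma>) \<Delta>" using CUTD[OF cp(2) weaken1[OF l(2)]] by blast
    then show ?thesis using CUTD[OF cp(1) l(1)] by blast
  next
    case False
    then obtain K where K: "\<Gamma>0 = add_mset A K" "\<Gamma> = add_mset (Conj \<phi> \<psi>) K"
      using split_ne[OF conjL.prems(1)] by fastforce
    have l: "sd (add_mset \<phi> (add_mset \<psi> K)) {#A#}" using inv_conjL[of \<phi> \<psi> K "{#A#}"] conjL.prems(2) K by simp
    have "sd (add_mset \<phi> (add_mset \<psi> K)) \<Delta>"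
      using conjL.IH[OF _ l] K by (simp add: add_mset_commute)
    then show ?thesis using conjL'[OF K(2) conjL.hyps(1)] by blast
  qed
next
  case (conjR \<Gamma>0 \<phi> \<psi>)
  then show ?case by (simp add: sd.conjR)
next
  case (disjL \<Delta> \<phi> \<Gamma>0 \<psi>)
  show ?case
  proof (cases "A = Disj \<phi> \<psi>")
    case True
    then have G: "\<Gamma>0 = \<Gamma>" using disjL.prems by simp
    have cp: "CUT \<phi>" "CUT \<psi>" using IH[of \<phi>] IH[of \<psi>] True by simp_all
    show ?thesis using disj_lemma[OF cp disjL.prems(2)] True disjL.hyps(2,3) G by simp
  next
    case False
    then obtain K where K: "\<Gamma>0 = add_mset A K" "\<Gamma> = add_mset (Disj \<phi> \<psi>) K"
      using split_ne[OF disjL.prems(1)] by fastforce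
    have l1: "sd (add_mset \<phi> K) {#A#}" using inv_disjL1[of \<phi> \<psi> K "{#A#}"] disjL.prems(2) K by simp
    have l2: "sd (add_mset \<psi> K) {#A#}" using inv_disjL2[of \<phi> \<psi> K "{#A#}"] disjL.prems(2) K by simp
    have 1: "sd (add_mset \<phi> K) \<Delta>"
      using disjL.IH(1)[OF _ l1] K by (simp add: add_mset_commute)
    have 2: "sd (add_mset \<psi> K) \<Delta>"
      using disjL.IH(2)[OF _ l2] K by (simp add: add_mset_commute)
    show ?thesis using disjL'[OF K(2) disjL.hyps(1) 1 2] .
  qed
next
  case (disjR1 \<Gamma>0 \<phi> \<psi>)
  then show ?case by (simp add: sd.disjR1)
next
  case (disjR2 \<Gamma>0 \<psi> \<phi>)
  then show ?case by (simp add: sd.disjR2)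
next
  case (impR \<phi> \<Gamma>0 \<psi>)
  have "sd (add_mset \<phi> \<Gamma>) {#\<psi>#}"
    using impR.IH[of "add_mset \<phi> \<Gamma>"] impR.prems weaken1[OF impR.prems(2), of \<phi>] by (simp add: add_mset_commute)
  then show ?case by (rule sd.impR)
next
  case (impL \<Delta> \<phi> \<psi> \<Gamma>0)
  show ?case
  proof (cases "A = Imp \<phi> \<psi>")
    case True
    then have G: "\<Gamma>0 = \<Gamma>" using impL.prems by simp
    have cp: "CUT \<phi>" "CUT \<psi>" using IH[of \<phi>] IH[of \<psi>] True by simp_all
    have 1: "sd \<Gamma> {#\<phi>#}" using impL.IH(1) impL.prems by simp
    have 2: "sd (add_mset \<phi> \<Gamma>) {#\<psi>#}" using inv_impR[OF impL.prems(2), of \<phi> \<psi>] True by simp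
    have 3: "sd \<Gamma> {#\<psi>#}" using CUTD[OF cp(1) 1 2] .
    show ?thesis using CUTD[OF cp(2) 3] impL.hyps(3) G by simp
  next
    case False
    then obtain K where K: "\<Gamma>0 = add_mset A K" "\<Gamma> = add_mset (Imp \<phi> \<psi>) K"
      using split_ne[OF impL.prems(1)] by fastforce
    have 1: "sd \<Gamma> {#\<phi>#}" using impL.IH(1) impL.prems K by (simp add: add_mset_commute)
    have l: "sd (add_mset \<psi> K) {#A#}" using inv_impL[of \<phi> \<psi> K "{#A#}"] impL.prems(2) K by simp
    have 2: "sd (add_mset \<psi> K) \<Delta>"
      using impL.IH(2)[OF _ l] K by (simp add: add_mset_commute)
    show ?thesis using impL'[OF K(2) impL.hyps(1) 1 2] .
  qed
next
  case (box rs \<phi> \<psi> \<Gamma>0)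
  have prs: "\<forall>(\<rho>', \<sigma>') \<in> set rs. sd {#\<phi>#} {#\<rho>'#} \<and> sd {#\<rho>'#} {#\<phi>#}"
    using box.IH(1) by fastforce
  show ?case
  proof (cases "A \<in># \<Gamma>0")
    case True
    then obtain K where K: "\<Gamma>0 = add_mset A K" by (meson multi_member_split)
    then have "\<Gamma> = K + bx rs" using box.prems(1) by simp
    then show ?thesis by (rule box'[OF _ prs box.hyps(1)])
  next
    case False
    have "A \<in># \<Gamma>0 + bx rs" using box.prems(1) by simp
    then have "A \<in># bx rs" using False by simp
    then obtain \<rho> \<sigma> where rs: "(\<rho>, \<sigma>) \<in> set rs" and A: "A = Box \<rho> \<sigma>" by auto
    define rest where "rest = remove1 (\<rho>, \<sigma>) rs"
    have mrs: "mset rs = add_mset (\<rho>, \<sigma>) (mset rest)" unfolding rest_def using rs by simp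
    have "bx rs = add_mset A (bx rest)" using mrs A by (simp add: mset_map)
    then have G: "\<Gamma> = \<Gamma>0 + bx rest" using box.prems(1) by simp
    have cp: "CUT \<rho>" "CUT \<sigma>" using IH[of \<rho>] IH[of \<sigma>] A by simp_all
    have fr: "sd {#\<phi>#} {#\<rho>#}" "sd {#\<rho>#} {#\<phi>#}" using rs prs by auto
    have "set rest \<subseteq> set rs" unfolding rest_def by (rule set_remove1_subset)
    then have prest: "\<forall>(a, b) \<in> set rest. sd {#\<phi>#} {#a#} \<and> sd {#a#} {#\<phi>#}" using prs by blast
    have "mset (map snd rs) = add_mset \<sigma> (mset (map snd rest))" using mrs by (simp add: mset_map)
    then have seq: "sd (add_mset \<sigma> (mset (map snd rest))) {#\<psi>#}" using box.hyps(1) by simp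
    show ?thesis using box_lemma[OF cp fr prest seq box.prems(2)] A G by simp
  qed
qed

lemma cut: "sd \<Gamma> {#A#} \<Longrightarrow> sd (add_mset A \<Gamma>) E \<Longrightarrow> sd \<Gamma> E"
proof (induction A arbitrary: \<Gamma> E rule: measure_induct_rule[of size])
  case (less A)
  have "CUT B" if "size B < size A" for B :: "'a fm" unfolding CUT_def using less.IH[OF that] by blast
  then show ?case using cut_step less.prems by blast
qed


lemma mem: "A \<in># \<Gamma> \<Longrightarrow> sd \<Gamma> {#A#}"
  by (metis idt multi_member_split)

lemma mp_rule: "Imp \<phi> \<psi> \<in># \<Gamma> \<Longrightarrow> sd \<Gamma> {#\<phi>#} \<Longrightarrow> sd (add_mset \<psi> \<Gamma>) \<Delta> \<Longrightarrow> sd \<Gamma> \<Delta>"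
proof -
  assume m: "Imp \<phi> \<psi> \<in># \<Gamma>" and a: "sd \<Gamma> {#\<phi>#}" and b: "sd (add_mset \<psi> \<Gamma>) \<Delta>"
  obtain K where K: "\<Gamma> = add_mset (Imp \<phi> \<psi>) K" using m by (meson multi_member_split)
  have "sd \<Gamma> {#\<psi>#}" by (rule impL'[OF K _ a idt]) simp
  then show ?thesis using b cut by blast
qed

lemma mp2: "sd (add_mset \<psi> \<Gamma>) \<Delta> \<Longrightarrow> Imp \<phi> \<psi> \<in># \<Gamma> \<Longrightarrow> sd \<Gamma> {#\<phi>#} \<Longrightarrow> sd \<Gamma> \<Delta>"
  using mp_rule by blast

lemma top_R: "sd \<Gamma> {#Top#}"
  unfolding Top_def Neg_def by (rule sd.impR) (simp add: sd.botL)

lemma hil_sd: "hil A \<Longrightarrow> sd {#} {#A#}"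
proof (induction rule: hil.induct)
  case (ax_K A B)
  show ?case by (intro sd.impR) (simp add: mem)
next
  case (ax_S A B C)
  show ?case
  proof (intro sd.impR)
    let ?G = "add_mset A (add_mset (Imp A B) (add_mset (Imp A (Imp B C)) {#}))"
    have "sd (add_mset C (add_mset (Imp B C) (add_mset B ?G))) {#C#}" by (simp add: mem)
    then have "sd (add_mset (Imp B C) (add_mset B ?G)) {#C#}"
      by (rule mp2[where \<psi>=C and \<phi>=B]) (simp_all add: mem)
    then have "sd (add_mset B ?G) {#C#}"
      by (rule mp2[where \<psi>="Imp B C" and \<phi>=A]) (simp_all add: mem)
    then show "sd ?G {#C#}"
      by (rule mp2[where \<psi>=B and \<phi>=A]) (simp_all add: mem)
  qed
next
  case (ax_C1 A B)
  show ?case by (intro sd.impR sd.conjL) (simp_all add: mem)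
next
  case (ax_C2 A B)
  show ?case by (intro sd.impR sd.conjL) (simp_all add: mem)
next
  case (ax_C3 A B)
  show ?case by (intro sd.impR sd.conjR) (simp_all add: mem)
next
  case (ax_D1 A B)
  show ?case by (intro sd.impR sd.disjR1) (simp_all add: mem)
next
  case (ax_D2 A B)
  show ?case by (intro sd.impR sd.disjR2) (simp_all add: mem)
next
  case (ax_D3 A C B)
  show ?case
  proof (intro sd.impR sd.disjL)
    let ?K = "add_mset (Imp B C) (add_mset (Imp A C) {#})"
    show "size {#C#} \<le> 1" by simp
    have "sd (add_mset C (add_mset A ?K)) {#C#}" by (simp add: mem)
    then show "sd (add_mset A ?K) {#C#}" by (rule mp2[where \<psi>=C and \<phi>=A]) (simp_all add: mem)
    have "sd (add_mset C (add_mset B ?K)) {#C#}" by (simp add: mem)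
    then show "sd (add_mset B ?K) {#C#}" by (rule mp2[where \<psi>=C and \<phi>=B]) (simp_all add: mem)
  qed
next
  case (ax_EFQ A)
  show ?case by (intro sd.impR) (simp add: sd.botL)
next
  case (MP A B)
  have "sd (add_mset A {#}) {#B#}" using inv_impR[OF MP.IH(1)] by simp
  then have "sd (add_mset A {#}) {#B#}" by simp
  then show ?case using cut MP.IH(2) by blast
next
  case (RA \<phi> \<rho> \<psi>)
  have c: "sd {#} {#Imp \<phi> \<rho>#}" "sd {#} {#Imp \<rho> \<phi>#}" using inv_conjR[OF RA.IH[unfolded Iff_def]] by simp_all
  have fr: "sd {#\<phi>#} {#\<rho>#}" using inv_impR[OF c(1)] by simp
  have rf: "sd {#\<rho>#} {#\<phi>#}" using inv_impR[OF c(2)] by simp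
  have 1: "sd {#Box \<phi> \<psi>#} {#Box \<rho> \<psi>#}"
    by (rule box'[of _ "{#}" "[(\<phi>, \<psi>)]"]) (simp_all add: fr rf mem)
  have 2: "sd {#Box \<rho> \<psi>#} {#Box \<phi> \<psi>#}"
    by (rule box'[of _ "{#}" "[(\<rho>, \<psi>)]"]) (simp_all add: fr rf mem)
  show ?case unfolding Iff_def using 1 2 by (intro sd.conjR sd.impR) simp_all
next
  case (RC \<psi> \<chi> \<phi>)
  have c: "sd {#} {#Imp \<psi> \<chi>#}" "sd {#} {#Imp \<chi> \<psi>#}" using inv_conjR[OF RC.IH[unfolded Iff_def]] by simp_all
  have fr: "sd {#\<psi>#} {#\<chi>#}" using inv_impR[OF c(1)] by simp
  have rf: "sd {#\<chi>#} {#\<psi>#}" using inv_impR[OF c(2)] by simp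
  have 1: "sd {#Box \<phi> \<psi>#} {#Box \<phi> \<chi>#}"
    by (rule box'[of _ "{#}" "[(\<phi>, \<psi>)]"]) (simp_all add: fr rf mem)
  have 2: "sd {#Box \<phi> \<chi>#} {#Box \<phi> \<psi>#}"
    by (rule box'[of _ "{#}" "[(\<phi>, \<chi>)]"]) (simp_all add: fr rf mem)
  show ?case unfolding Iff_def using 1 2 by (intro sd.conjR sd.impR) simp_all
next
  case (CM \<phi> \<psi> \<chi>)
  have a: "sd {#Conj \<psi> \<chi>#} {#\<psi>#}" "sd {#Conj \<psi> \<chi>#} {#\<chi>#}"
    by (intro sd.conjL; simp add: mem)+
  have 1: "sd {#Box \<phi> (Conj \<psi> \<chi>)#} {#Box \<phi> \<psi>#}"
    by (rule box'[of _ "{#}" "[(\<phi>, Conj \<psi> \<chi>)]"]) (simp_all add: mem a)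
  have 2: "sd {#Box \<phi> (Conj \<psi> \<chi>)#} {#Box \<phi> \<chi>#}"
    by (rule box'[of _ "{#}" "[(\<phi>, Conj \<psi> \<chi>)]"]) (simp_all add: mem a)
  show ?case using 1 2 by (intro sd.impR sd.conjR) simp_all
next
  case (CC \<phi> \<psi> \<chi>)
  have a: "sd {#\<psi>, \<chi>#} {#Conj \<psi> \<chi>#}" by (intro sd.conjR) (simp_all add: mem)
  have "sd {#Box \<phi> \<psi>, Box \<phi> \<chi>#} {#Box \<phi> (Conj \<psi> \<chi>)#}"
    by (rule box'[of _ "{#}" "[(\<phi>, \<psi>), (\<phi>, \<chi>)]"]) (simp_all add: mem a)
  then show ?case by (intro sd.impR sd.conjL) simp_all
next
  case (CN \<phi>)
  show ?case by (rule box'[of _ "{#}" "[]"]) (simp_all add: top_R)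
qed

lemma bigConj_R: "gs \<noteq> [] \<Longrightarrow> set gs \<subseteq> set_mset \<Gamma> \<Longrightarrow> sd \<Gamma> {#bigConj gs#}"
proof (induction gs rule: bigConj.induct)
  case 1 then show ?case by simp
next
  case (2 x) then show ?case by (simp add: mem)
next
  case (3 x y ys) then show ?case by (simp add: mem sd.conjR)
qed

lemma to_Delta: "size \<Delta> \<le> 1 \<Longrightarrow> sd \<Gamma> {#dd \<Delta>#} \<Longrightarrow> sd \<Gamma> \<Delta>"
proof (cases \<Delta>)
  case empty
  then show "size \<Delta> \<le> 1 \<Longrightarrow> sd \<Gamma> {#dd \<Delta>#} \<Longrightarrow> sd \<Gamma> \<Delta>" using bot_right[of \<Gamma> "{#Bot#}" "{#}"] by simp
next
  case (add x M)
  then show "size \<Delta> \<le> 1 \<Longrightarrow> sd \<Gamma> {#dd \<Delta>#} \<Longrightarrow> sd \<Gamma> \<Delta>" by simp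
qed

theorem theorem7:
  fixes \<Gamma> \<Delta> :: "'a fm multiset"
  assumes "size \<Delta> \<le> 1"
  shows "sd \<Gamma> \<Delta> \<longleftrightarrow> hil (iota \<Gamma> \<Delta>)"
proof
  assume "sd \<Gamma> \<Delta>" then show "hil (iota \<Gamma> \<Delta>)" by (rule sound)
next
  assume h: "hil (iota \<Gamma> \<Delta>)"
  show "sd \<Gamma> \<Delta>"
  proof (cases "\<Gamma> = {#}")
    case True
    then have "sd \<Gamma> {#dd \<Delta>#}" using hil_sd[OF h] by (simp add: iota_eq)
    then show ?thesis using to_Delta assms by blast
  next
    case False
    define gs where "gs = (SOME gs. mset gs = \<Gamma>)"
    have m: "mset gs = \<Gamma>" unfolding gs_def by (rule someI_ex, rule ex_mset)
    then have ne: "gs \<noteq> []" using False by auto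
    have "sd {#} {#Imp (bigConj gs) (dd \<Delta>)#}" using hil_sd[OF h] False by (simp add: iota_eq gs_def)
    then have "sd {#bigConj gs#} {#dd \<Delta>#}" using inv_impR by fastforce
    then have "sd ({#bigConj gs#} + \<Gamma>) {#dd \<Delta>#}" by (rule weaken)
    then have 1: "sd (add_mset (bigConj gs) \<Gamma>) {#dd \<Delta>#}" by simp
    have 2: "sd \<Gamma> {#bigConj gs#}" using bigConj_R ne m by fastforce
    have "sd \<Gamma> {#dd \<Delta>#}" using cut[OF 2 1] .
    then show ?thesis using to_Delta assms by blast
  qed
qed


end
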